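(* Let $K$ be a field of characteristic zero, $x=(x_1,\dots,x_n)$, $y=(y_1,\dots,y_n)$, let $F\in K[x]^n$ be a polynomial map and $f\in K[x]$. Set $G:=\nabla_{x,y}\big(f+y^{\mathsf T}F\big)\in K[x,y]^{2n}$. Then $\det\mathcal{J}_{x,y}G=(-1)^n(\det\mathcal{J}F)^2$, and $F$ is invertible if and only if $G$ is invertible. Furthermore, if $F$ is a Keller map, then $$\mu_1G_1+\mu_2G_2+\cdots+\mu_{2n}G_{2n}+\mu_{2n+1}$$ is irreducible for all $\mu\in K^{2n+1}$ such that $\mu_i\neq 0$ for some $i\le n$.
   Context: $\nabla_{x,y}$ is the gradient (column vector of partial derivatives) with respect to $x_1,\dots,x_n,y_1,\dots,y_n$; $y^{\mathsf T}F=\sum_j y_jF_j$. $\mathcal{J}$ denotes the Jacobian matrix. A Keller map is a polynomial map $F\in K[x]^n$ with $\det\mathcal{J}F\in K^{*}$. *)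

theory Defs
  imports "HOL-Library.Poly_Mapping" "HOL-Computational_Algebra.Factorial_Ring"
    "Jordan_Normal_Form.Determinant"
begin

text \<open>With n fixed, the
  variables x_1..x_n are z_0..z_(n-1) and y_1..y_n are z_n..z_(2n-1).\<close>

type_synonym 'a mpoly = "(nat \<Rightarrow>\<^sub>0 nat) \<Rightarrow>\<^sub>0 'a"

definition Const :: "'a::zero \<Rightarrow> 'a mpoly" where
  "Const c = Poly_Mapping.single 0 c"

definition Var :: "nat \<Rightarrow> 'a::{zero,one} mpoly" where
  "Var i = Poly_Mapping.single (Poly_Mapping.single i 1) 1"

definition vars_in :: "'a::zero mpoly \<Rightarrow> nat set \<Rightarrow> bool" where
  "vars_in p S \<longleftrightarrow> (\<forall>m \<in> Poly_Mapping.keys p. Poly_Mapping.keys m \<subseteq> S)"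

definition pdiff :: "nat \<Rightarrow> 'a::comm_semiring_1 mpoly \<Rightarrow> 'a mpoly" where
  "pdiff i p = (\<Sum>m \<in> Poly_Mapping.keys p.
      Poly_Mapping.single (m - Poly_Mapping.single i 1)
        (of_nat (Poly_Mapping.lookup m i) * Poly_Mapping.lookup p m))"

definition subst :: "(nat \<Rightarrow> 'a::comm_semiring_1 mpoly) \<Rightarrow> 'a mpoly \<Rightarrow> 'a mpoly" where
  "subst s p = (\<Sum>m \<in> Poly_Mapping.keys p.
      Const (Poly_Mapping.lookup p m) *
      (\<Prod>v \<in> Poly_Mapping.keys m. s v ^ Poly_Mapping.lookup m v))"

definition jac :: "nat \<Rightarrow> (nat \<Rightarrow> 'a::comm_ring_1 mpoly) \<Rightarrow> 'a mpoly mat" where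
  "jac N P = mat N N (\<lambda>(i,j). pdiff j (P i))"

definition poly_map_invertible :: "nat \<Rightarrow> (nat \<Rightarrow> 'a::comm_semiring_1 mpoly) \<Rightarrow> bool" where
  "poly_map_invertible N P \<longleftrightarrow>
     (\<exists>Q. (\<forall>i<N. vars_in (Q i) {..<N}) \<and>
          (\<forall>i<N. subst Q (P i) = Var i) \<and>
          (\<forall>i<N. subst P (Q i) = Var i))"

definition keller :: "nat \<Rightarrow> (nat \<Rightarrow> 'a::comm_ring_1 mpoly) \<Rightarrow> bool" where
  "keller N P \<longleftrightarrow> (\<exists>c. c \<noteq> 0 \<and> det (jac N P) = Const c)"

end

theory Submission
  imports Defs "HOL-Computational_Algebra.Polynomial"
begin

lemma pm_expand:
  fixes p :: "'k \<Rightarrow>\<^sub>0 'b::comm_monoid_add"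
  shows "p = (\<Sum>m\<in>Poly_Mapping.keys p. Poly_Mapping.single m (Poly_Mapping.lookup p m))"
proof (rule poly_mapping_eqI)
  fix k
  have "Poly_Mapping.lookup (\<Sum>m\<in>Poly_Mapping.keys p. Poly_Mapping.single m (Poly_Mapping.lookup p m)) k
      = (\<Sum>m\<in>Poly_Mapping.keys p. (if m = k then Poly_Mapping.lookup p m else 0))"
    by (simp add: lookup_sum lookup_single when_def)
  also have "\<dots> = Poly_Mapping.lookup p k"
    by (simp add: sum.delta' in_keys_iff)
  finally show "Poly_Mapping.lookup p k = Poly_Mapping.lookup (\<Sum>m\<in>Poly_Mapping.keys p. Poly_Mapping.single m (Poly_Mapping.lookup p m)) k" by simp
qed

lemma pm_induct_add[case_names zero single add]:
  fixes p :: "'k \<Rightarrow>\<^sub>0 'b::comm_monoid_add"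
  assumes "P 0" "\<And>m c. P (Poly_Mapping.single m c)" "\<And>p q. P p \<Longrightarrow> P q \<Longrightarrow> P (p + q)"
  shows "P p"
proof -
  have "P (\<Sum>m\<in>S. Poly_Mapping.single m (Poly_Mapping.lookup p m))" if "finite S" for S
    using that by (induction S rule: finite_induct) (auto intro: assms)
  then show ?thesis by (subst pm_expand) simp
qed

definition lin :: "((nat \<Rightarrow>\<^sub>0 nat) \<Rightarrow> 'a::zero \<Rightarrow> 'b::comm_monoid_add) \<Rightarrow> 'a mpoly \<Rightarrow> 'b" where
  "lin g p = (\<Sum>m\<in>Poly_Mapping.keys p. g m (Poly_Mapping.lookup p m))"

lemma lin_superset:
  assumes "finite S" "Poly_Mapping.keys p \<subseteq> S" "\<And>m. g m 0 = 0"
  shows "lin g p = (\<Sum>m\<in>S. g m (Poly_Mapping.lookup p m))"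
  unfolding lin_def
  by (rule sum.mono_neutral_left) (use assms in \<open>auto simp: in_keys_iff\<close>)

lemma lin_zero[simp]: "lin g 0 = 0"
  by (simp add: lin_def)

lemma lin_add:
  fixes p q :: "'a::comm_monoid_add mpoly"
  assumes "\<And>m. g m 0 = 0" "\<And>m a b. g m (a + b) = g m a + g m b"
  shows "lin g (p + q) = lin g p + lin g q"
proof -
  let ?S = "Poly_Mapping.keys p \<union> Poly_Mapping.keys q"
  have "lin g (p + q) = (\<Sum>m\<in>?S. g m (Poly_Mapping.lookup (p+q) m))"
    by (rule lin_superset) (use assms keys_add[of p q] in auto)
  also have "\<dots> = (\<Sum>m\<in>?S. g m (Poly_Mapping.lookup p m)) + (\<Sum>m\<in>?S. g m (Poly_Mapping.lookup q m))"
    by (simp add: lookup_add assms sum.distrib)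
  also have "\<dots> = lin g p + lin g q"
    by (subst (1 2) lin_superset[of ?S]) (use assms in auto)
  finally show ?thesis .
qed

lemma lin_single:
  assumes "\<And>m. g m 0 = 0"
  shows "lin g (Poly_Mapping.single m c) = g m c"
  using assms by (cases "c = 0") (auto simp: lin_def)

lemma lin_sum:
  fixes f :: "'i \<Rightarrow> 'a::comm_monoid_add mpoly"
  assumes "\<And>m. g m 0 = 0" "\<And>m a b. g m (a + b) = g m a + g m b"
  shows "lin g (\<Sum>i\<in>I. f i) = (\<Sum>i\<in>I. lin g (f i))"
  by (induction I rule: infinite_finite_induct) (auto simp: lin_add assms)

lemma lin_mult:
  fixes p q :: "'a::comm_semiring_1 mpoly" and g :: "_ \<Rightarrow> 'a \<Rightarrow> 'b::comm_semiring_1"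
  assumes g0: "\<And>m. g m 0 = 0" and gadd: "\<And>m a b. g m (a + b) = g m a + g m b"
    and gmult: "\<And>a b c d. g (a + b) (c * d) = g a c * g b d"
  shows "lin g (p * q) = lin g p * lin g q"
proof (induction p arbitrary: q rule: pm_induct_add)
  case zero then show ?case by simp
next
  case (single m c)
  show ?case
  proof (induction q rule: pm_induct_add)
    case zero then show ?case by simp
  next
    case (single m' c')
    have "lin g (Poly_Mapping.single m c * Poly_Mapping.single m' c') = lin g (Poly_Mapping.single (m + m') (c * c'))"
      by (simp only: mult_single)
    also have "\<dots> = g (m + m') (c * c')" by (rule lin_single[of g, OF g0])
    also have "\<dots> = g m c * g m' c'" by (rule gmult)
    finally show ?case by (simp only: lin_single[of g, OF g0])
  next
    case (add q1 q2)
    then show ?case by (simp only: distrib_left lin_add[of g, OF g0 gadd])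
  qed
next
  case (add p1 p2)
  then show ?case by (simp only: distrib_right lin_add[of g, OF g0 gadd])
qed

lemma lin_id: "lin Poly_Mapping.single p = p"
  unfolding lin_def by (rule pm_expand[symmetric])

lemma Const_0[simp]: "Const 0 = 0" by (simp add: Const_def)
lemma Const_1[simp]: "Const 1 = (1::'a::comm_semiring_1 mpoly)" by (simp add: Const_def)
lemma Const_add: "Const (a + b) = Const a + (Const b :: 'a::monoid_add mpoly)"
  by (simp add: Const_def single_add)
lemma Const_mult: "Const (a * b) = Const a * (Const b :: 'a::semiring_0 mpoly)"
  by (simp add: Const_def mult_single)
lemma Const_uminus: "Const (- a) = - (Const a :: 'a::ab_group_add mpoly)"
  by (simp add: Const_def single_uminus)
lemma Const_diff: "Const (a - b) = Const a - (Const b :: 'a::ab_group_add mpoly)"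
  by (simp add: Const_def single_diff)
lemma Const_eq_iff[simp]: "Const a = Const b \<longleftrightarrow> a = b"
  unfolding Const_def by (metis lookup_single_eq)
lemma Const_eq_0_iff[simp]: "Const a = 0 \<longleftrightarrow> a = 0"
  unfolding Const_def by (metis lookup_single_eq single_zero lookup_zero)

lemma Var_power: "Var v ^ k = (Poly_Mapping.single (Poly_Mapping.single v k) 1 :: 'a::comm_semiring_1 mpoly)"
proof (induction k)
  case 0 then show ?case by simp
next
  case (Suc k)
  have "Var v ^ Suc k = Poly_Mapping.single (Poly_Mapping.single v 1) 1 * Poly_Mapping.single (Poly_Mapping.single v k) (1::'a)"
    by (subst power_Suc, subst Suc, simp add: Var_def)
  also have "\<dots> = Poly_Mapping.single (Poly_Mapping.single v 1 + Poly_Mapping.single v k) 1"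
    by (simp only: mult_single mult_1)
  also have "\<dots> = Poly_Mapping.single (Poly_Mapping.single v (Suc k)) 1"
    by (simp only: single_add[symmetric] plus_1_eq_Suc)
  finally show ?case .
qed

lemma prod_single_one:
  "(\<Prod>v\<in>S. Poly_Mapping.single (f v) (1::'a::comm_semiring_1)) = Poly_Mapping.single (\<Sum>v\<in>S. f v) 1"
proof (induction S rule: infinite_finite_induct)
  case (infinite A) then show ?case by simp
next
  case empty then show ?case by simp
next
  case (insert x F)
  have "(\<Prod>v\<in>insert x F. Poly_Mapping.single (f v) (1::'a)) = Poly_Mapping.single (f x) 1 * (\<Prod>v\<in>F. Poly_Mapping.single (f v) 1)"
    by (rule prod.insert[OF insert(1,2)])
  also have "\<dots> = Poly_Mapping.single (f x + (\<Sum>v\<in>F. f v)) 1"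
    by (simp only: insert(3) mult_single mult_1)
  also have "f x + (\<Sum>v\<in>F. f v) = (\<Sum>v\<in>insert x F. f v)"
    by (rule sum.insert[OF insert(1,2), symmetric])
  finally show ?case .
qed

lemma monomial_decomp:
  "(Poly_Mapping.single m c :: 'a::comm_semiring_1 mpoly) = Const c * (\<Prod>v\<in>Poly_Mapping.keys m. Var v ^ Poly_Mapping.lookup m v)"
proof -
  have 1: "(\<Prod>v\<in>Poly_Mapping.keys m. (Var v ^ Poly_Mapping.lookup m v :: 'a mpoly))
      = (\<Prod>v\<in>Poly_Mapping.keys m. Poly_Mapping.single (Poly_Mapping.single v (Poly_Mapping.lookup m v)) 1)"
    by (intro prod.cong refl Var_power)
  also have "\<dots> = Poly_Mapping.single (\<Sum>v\<in>Poly_Mapping.keys m. Poly_Mapping.single v (Poly_Mapping.lookup m v)) 1"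
    by (rule prod_single_one)
  also have "(\<Sum>v\<in>Poly_Mapping.keys m. Poly_Mapping.single v (Poly_Mapping.lookup m v)) = m"
    by (rule pm_expand[symmetric])
  finally have 4: "(\<Prod>v\<in>Poly_Mapping.keys m. (Var v ^ Poly_Mapping.lookup m v :: 'a mpoly)) = Poly_Mapping.single m 1" .
  have "Const c * Poly_Mapping.single m 1 = (Poly_Mapping.single (0 + m) (c * 1) :: 'a mpoly)"
    unfolding Const_def by (rule mult_single)
  then show ?thesis unfolding 4 by simp
qed

lemma vars_in_0[simp]: "vars_in 0 S" by (simp add: vars_in_def)
lemma vars_in_Const[simp]: "vars_in (Const c) S" by (simp add: vars_in_def Const_def)
lemma vars_in_1[simp]: "vars_in (1::'a::comm_semiring_1 mpoly) S"
  using vars_in_Const[of "1::'a" S] by (simp only: Const_1)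
lemma vars_in_Var: "v \<in> S \<Longrightarrow> vars_in (Var v :: 'a::zero_neq_one mpoly) S"
  by (simp add: vars_in_def Var_def)
lemma vars_in_single: "Poly_Mapping.keys m \<subseteq> S \<Longrightarrow> vars_in (Poly_Mapping.single m c) S"
  by (simp add: vars_in_def)
lemma vars_in_mono: "vars_in p S \<Longrightarrow> S \<subseteq> T \<Longrightarrow> vars_in p T"
  unfolding vars_in_def by blast
lemma vars_in_add: "vars_in p S \<Longrightarrow> vars_in q S \<Longrightarrow> vars_in (p + q :: 'a::monoid_add mpoly) S"
proof -
  assume a: "vars_in p S" "vars_in q S"
  show ?thesis unfolding vars_in_def
  proof
    fix m assume "m \<in> Poly_Mapping.keys (p + q)"
    then have "m \<in> Poly_Mapping.keys p \<or> m \<in> Poly_Mapping.keys q" using keys_add[of p q] by blast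
    then show "Poly_Mapping.keys m \<subseteq> S" using a unfolding vars_in_def by blast
  qed
qed
lemma keys_uminus_pm: "Poly_Mapping.keys (- p) = Poly_Mapping.keys (p :: 'k \<Rightarrow>\<^sub>0 'a::ab_group_add)"
  unfolding set_eq_iff in_keys_iff by simp
lemma vars_in_uminus: "vars_in p S \<Longrightarrow> vars_in (- p :: 'a::ab_group_add mpoly) S"
  unfolding vars_in_def keys_uminus_pm .
lemma vars_in_diff: "vars_in p S \<Longrightarrow> vars_in q S \<Longrightarrow> vars_in (p - q :: 'a::ab_group_add mpoly) S"
  unfolding diff_conv_add_uminus by (intro vars_in_add vars_in_uminus)
lemma vars_in_mult: "vars_in p S \<Longrightarrow> vars_in q S \<Longrightarrow> vars_in (p * q :: 'a::comm_semiring_1 mpoly) S"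
proof -
  assume a: "vars_in p S" "vars_in q S"
  show ?thesis unfolding vars_in_def
  proof
    fix m assume "m \<in> Poly_Mapping.keys (p * q)"
    then obtain x y where xy: "m = x + y" "x \<in> Poly_Mapping.keys p" "y \<in> Poly_Mapping.keys q"
      using keys_mult[of p q] by blast
    have "Poly_Mapping.keys m \<subseteq> Poly_Mapping.keys x \<union> Poly_Mapping.keys y"
      unfolding xy(1) by (rule keys_add)
    moreover have "Poly_Mapping.keys x \<subseteq> S" "Poly_Mapping.keys y \<subseteq> S"
      using a xy unfolding vars_in_def by blast+
    ultimately show "Poly_Mapping.keys m \<subseteq> S" by blast
  qed
qed
lemma vars_in_sum: "(\<And>i. i \<in> I \<Longrightarrow> vars_in (f i) S) \<Longrightarrow> vars_in (\<Sum>i\<in>I. f i :: 'a::comm_monoid_add mpoly) S"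
proof (induction I rule: infinite_finite_induct)
  case (insert x F) then show ?case by (simp add: vars_in_add)
qed simp_all
lemma vars_in_prod: "(\<And>i. i \<in> I \<Longrightarrow> vars_in (f i) S) \<Longrightarrow> vars_in (\<Prod>i\<in>I. f i :: 'a::comm_semiring_1 mpoly) S"
proof (induction I rule: infinite_finite_induct)
  case (insert x F) then show ?case by (simp add: vars_in_mult)
qed simp_all
lemma vars_in_power: "vars_in p S \<Longrightarrow> vars_in (p ^ k :: 'a::comm_semiring_1 mpoly) S"
  by (induction k) (simp_all add: vars_in_mult)

lemma mpoly_induct_vars[consumes 1, case_names Const Var add mult]:
  fixes p :: "'a::comm_semiring_1 mpoly"
  assumes vp: "vars_in p V" and C: "\<And>c. P (Const c)" and Vr: "\<And>v. v \<in> V \<Longrightarrow> P (Var v)"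
    and A: "\<And>p q. P p \<Longrightarrow> P q \<Longrightarrow> P (p + q)" and M: "\<And>p q. P p \<Longrightarrow> P q \<Longrightarrow> P (p * q)"
  shows "P p"
proof -
  have P1: "P 1" using C[of 1] by (simp only: Const_1)
  have P0: "P 0" using C[of 0] by (simp only: Const_0)
  have pw: "P (Var v ^ k)" if "v \<in> V" for v k
  proof (induction k)
    case 0 then show ?case using P1 by (simp only: power_0)
  next
    case (Suc k) then show ?case using M[OF Vr[OF that] Suc] by (simp only: power_Suc)
  qed
  have pr: "P (\<Prod>v\<in>T. Var v ^ f v)" if "T \<subseteq> V" for T f
    using that
  proof (induction T rule: infinite_finite_induct)
    case (infinite A) then show ?case using P1 by simp
  next
    case empty then show ?case using P1 by (simp only: prod.empty)
  next
    case (insert x F)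
    have "P (Var x ^ f x * (\<Prod>v\<in>F. Var v ^ f v))"
      using insert pw M by blast
    then show ?case by (simp only: prod.insert[OF insert(1,2)])
  qed
  have mono: "P (Poly_Mapping.single m c)" if "Poly_Mapping.keys m \<subseteq> V" for m c
  proof -
    have "P (Const c * (\<Prod>v\<in>Poly_Mapping.keys m. Var v ^ Poly_Mapping.lookup m v))"
      using M[OF C pr[OF that]] .
    then show ?thesis by (simp only: monomial_decomp[symmetric])
  qed
  have "P (\<Sum>m\<in>S. Poly_Mapping.single m (Poly_Mapping.lookup p m))" if "finite S" "S \<subseteq> Poly_Mapping.keys p" for S
    using that
  proof (induction S rule: finite_induct)
    case empty then show ?case using P0 by (simp only: sum.empty)
  next
    case (insert x F)
    have "Poly_Mapping.keys x \<subseteq> V" using insert(4) vp unfolding vars_in_def by blast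
    then have "P (Poly_Mapping.single x (Poly_Mapping.lookup p x) + (\<Sum>m\<in>F. Poly_Mapping.single m (Poly_Mapping.lookup p m)))"
      using A mono insert by blast
    then show ?case by (simp only: sum.insert[OF insert(1,2)])
  qed
  from this[of "Poly_Mapping.keys p"] show ?thesis by (simp only: pm_expand[symmetric] finite_keys subset_refl)
qed

definition pdg :: "nat \<Rightarrow> (nat \<Rightarrow>\<^sub>0 nat) \<Rightarrow> 'a::comm_semiring_1 \<Rightarrow> 'a mpoly" where
  "pdg i m c = Poly_Mapping.single (m - Poly_Mapping.single i 1) (of_nat (Poly_Mapping.lookup m i) * c)"

lemma pdg0: "pdg i m 0 = 0" by (simp add: pdg_def)
lemma pdg_add: "pdg i m (a + b) = pdg i m a + pdg i m b"
  by (simp add: pdg_def distrib_left single_add)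

lemma pdiff_lin: "pdiff i p = lin (pdg i) p"
  by (simp add: pdiff_def lin_def pdg_def)

lemma pdiff_add: "pdiff i (p + q) = pdiff i p + pdiff i q"
  unfolding pdiff_lin by (rule lin_add[of "pdg i", OF pdg0 pdg_add])

lemma pdiff_0[simp]: "pdiff i 0 = 0"
  unfolding pdiff_lin by simp

lemma pdiff_single: "pdiff i (Poly_Mapping.single m c) = pdg i m c"
  unfolding pdiff_lin by (rule lin_single[of "pdg i", OF pdg0])

lemma pdiff_sum: "pdiff i (\<Sum>k\<in>K. f k) = (\<Sum>k\<in>K. pdiff i (f k))"
  unfolding pdiff_lin by (rule lin_sum[of "pdg i", OF pdg0 pdg_add])

lemma pdiff_uminus: "pdiff i (- p) = - pdiff i (p :: 'a::comm_ring_1 mpoly)"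
proof -
  have "pdiff i (p + - p) = 0" by simp
  then have "pdiff i p + pdiff i (- p) = 0" by (simp only: pdiff_add)
  then show ?thesis by (simp add: eq_neg_iff_add_eq_0 add.commute)
qed

lemma pdiff_diff: "pdiff i (p - q) = pdiff i p - pdiff i (q :: 'a::comm_ring_1 mpoly)"
  by (simp only: diff_conv_add_uminus pdiff_add pdiff_uminus)

lemma minus_e_add1:
  assumes "Poly_Mapping.lookup a i \<noteq> 0"
  shows "a - Poly_Mapping.single i 1 + b = a + b - Poly_Mapping.single i (1::nat)"
proof (rule poly_mapping_eqI)
  fix k show "Poly_Mapping.lookup (a - Poly_Mapping.single i 1 + b) k = Poly_Mapping.lookup (a + b - Poly_Mapping.single i 1) k"
    using assms by (cases "k = i") (simp_all add: lookup_add lookup_minus lookup_single)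
qed

lemma minus_e_add2:
  assumes "Poly_Mapping.lookup b i \<noteq> 0"
  shows "a + (b - Poly_Mapping.single i 1) = a + b - Poly_Mapping.single i (1::nat)"
proof (rule poly_mapping_eqI)
  fix k show "Poly_Mapping.lookup (a + (b - Poly_Mapping.single i 1)) k = Poly_Mapping.lookup (a + b - Poly_Mapping.single i 1) k"
    using assms by (cases "k = i") (simp_all add: lookup_add lookup_minus lookup_single)
qed

lemma pdg_mult_single1:
  "pdg i a c * Poly_Mapping.single b d = Poly_Mapping.single (a + b - Poly_Mapping.single i 1) (of_nat (Poly_Mapping.lookup a i) * c * d)"
proof (cases "Poly_Mapping.lookup a i = 0")
  case True then show ?thesis by (simp add: pdg_def)
next
  case False then show ?thesis unfolding pdg_def mult_single minus_e_add1[OF False] by (simp add: mult.assoc)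
qed

lemma pdg_mult_single2:
  "Poly_Mapping.single a c * pdg i b d = Poly_Mapping.single (a + b - Poly_Mapping.single i 1) (c * (of_nat (Poly_Mapping.lookup b i) * d))"
proof (cases "Poly_Mapping.lookup b i = 0")
  case True then show ?thesis by (simp add: pdg_def)
next
  case False then show ?thesis unfolding pdg_def mult_single minus_e_add2[OF False] by (simp add: mult.assoc)
qed

lemma pdiff_mult_single:
  "pdiff i (Poly_Mapping.single a c * Poly_Mapping.single b d) =
     pdiff i (Poly_Mapping.single a c) * Poly_Mapping.single b d + Poly_Mapping.single a c * pdiff i (Poly_Mapping.single b (d::'a::comm_semiring_1))"
proof -
  have "pdiff i (Poly_Mapping.single a c) * Poly_Mapping.single b d + Poly_Mapping.single a c * pdiff i (Poly_Mapping.single b d)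
     = Poly_Mapping.single (a + b - Poly_Mapping.single i 1) (of_nat (Poly_Mapping.lookup a i) * c * d + c * (of_nat (Poly_Mapping.lookup b i) * d))"
    by (simp only: pdiff_single pdg_mult_single1 pdg_mult_single2 single_add)
  also have "of_nat (Poly_Mapping.lookup a i) * c * d + c * (of_nat (Poly_Mapping.lookup b i) * d)
     = of_nat (Poly_Mapping.lookup (a + b) i) * (c * d)"
    by (simp add: lookup_add algebra_simps)
  finally show ?thesis by (simp only: mult_single pdiff_single pdg_def)
qed

lemma pdiff_mult: "pdiff i (p * q) = pdiff i p * q + p * pdiff i (q :: 'a::comm_semiring_1 mpoly)"
proof (induction p arbitrary: q rule: pm_induct_add)
  case zero then show ?case by simp
next
  case (single m c)
  show ?case
  proof (induction q rule: pm_induct_add)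
    case zero then show ?case by simp
  next
    case (single m' c')
    show ?case by (rule pdiff_mult_single)
  next
    case (add q1 q2)
    then show ?case by (simp only: distrib_left pdiff_add add_ac)
  qed
next
  case (add p1 p2)
  then show ?case by (simp only: distrib_right pdiff_add add_ac)
qed

lemma pdiff_Const[simp]: "pdiff i (Const c) = 0"
  by (simp add: Const_def pdiff_single pdg_def)

lemma pdiff_Var: "pdiff i (Var j) = (if i = j then 1 else (0::'a::comm_semiring_1 mpoly))"
  by (cases "i = j") (simp_all add: Var_def pdiff_single pdg_def lookup_single)

lemma pdiff_Var_same[simp]: "pdiff i (Var i) = (1::'a::comm_semiring_1 mpoly)"
  by (simp add: pdiff_Var)

lemma pdiff_Const_mult: "pdiff i (Const c * p) = Const c * pdiff i p"
  by (simp add: pdiff_mult)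

lemma pdiff_notin:
  assumes "vars_in p S" "i \<notin> S"
  shows "pdiff i p = 0"
  unfolding pdiff_def
proof (rule sum.neutral, rule ballI)
  fix m assume "m \<in> Poly_Mapping.keys p"
  then have "Poly_Mapping.keys m \<subseteq> S" using assms(1) unfolding vars_in_def by blast
  then have "Poly_Mapping.lookup m i = 0" using assms(2) by (auto simp: in_keys_iff)
  then show "Poly_Mapping.single (m - Poly_Mapping.single i 1) (of_nat (Poly_Mapping.lookup m i) * Poly_Mapping.lookup p m) = 0"
    by simp
qed

lemma keys_minus_sub: "Poly_Mapping.keys (m - x) \<subseteq> Poly_Mapping.keys (m :: 'k \<Rightarrow>\<^sub>0 nat)"
  by (auto simp: in_keys_iff lookup_minus)

lemma vars_in_pdiff:
  assumes "vars_in p S"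
  shows "vars_in (pdiff i p) S"
  unfolding pdiff_def
proof (rule vars_in_sum)
  fix m assume "m \<in> Poly_Mapping.keys p"
  then have "Poly_Mapping.keys m \<subseteq> S" using assms(1) unfolding vars_in_def by blast
  then show "vars_in (Poly_Mapping.single (m - Poly_Mapping.single i 1) (of_nat (Poly_Mapping.lookup m i) * Poly_Mapping.lookup p m)) S"
    using keys_minus_sub[of m] by (intro vars_in_single) blast
qed

lemma minus_e_plus_e:
  assumes "Poly_Mapping.lookup x i \<noteq> 0"
  shows "x - Poly_Mapping.single i 1 + Poly_Mapping.single i (1::nat) = x"
proof (rule poly_mapping_eqI)
  fix k show "Poly_Mapping.lookup (x - Poly_Mapping.single i 1 + Poly_Mapping.single i 1) k = Poly_Mapping.lookup x k"
    using assms by (cases "k = i") (simp_all add: lookup_add lookup_minus lookup_single)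
qed

lemma pdiff_eq_0_imp:
  fixes p :: "'a::field_char_0 mpoly"
  assumes "pdiff i p = 0" "m \<in> Poly_Mapping.keys p"
  shows "Poly_Mapping.lookup m i = 0"
proof (rule ccontr)
  assume mi: "Poly_Mapping.lookup m i \<noteq> 0"
  let ?e = "Poly_Mapping.single i (1::nat)"
  let ?t = "\<lambda>m'. (if m' - ?e = m - ?e then of_nat (Poly_Mapping.lookup m' i) * Poly_Mapping.lookup p m' else (0::'a))"
  have "Poly_Mapping.lookup (pdiff i p) (m - ?e) = (\<Sum>m'\<in>Poly_Mapping.keys p. ?t m')"
    unfolding pdiff_def lookup_sum by (intro sum.cong refl) (simp add: lookup_single when_def)
  also have "\<dots> = ?t m + (\<Sum>m'\<in>Poly_Mapping.keys p - {m}. ?t m')"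
    using assms(2) by (simp add: sum.remove)
  also have "(\<Sum>m'\<in>Poly_Mapping.keys p - {m}. ?t m') = 0"
  proof (rule sum.neutral, rule ballI)
    fix m' assume m': "m' \<in> Poly_Mapping.keys p - {m}"
    show "?t m' = 0"
    proof (cases "Poly_Mapping.lookup m' i = 0")
      case False
      have "m' - ?e \<noteq> m - ?e"
      proof
        assume "m' - ?e = m - ?e"
        then have "m' - ?e + ?e = m - ?e + ?e" by simp
        then have "m' = m" using minus_e_plus_e[OF False] minus_e_plus_e[OF mi] by simp
        then show False using m' by simp
      qed
      then show ?thesis by simp
    qed simp
  qed
  finally have "Poly_Mapping.lookup (pdiff i p) (m - ?e) = of_nat (Poly_Mapping.lookup m i) * Poly_Mapping.lookup p m"
    by simp
  moreover have "of_nat (Poly_Mapping.lookup m i) * Poly_Mapping.lookup p m \<noteq> (0::'a)"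
    using mi assms(2) by (simp add: in_keys_iff)
  ultimately show False using assms(1) by simp
qed

lemma pdiff_eq_0_vars:
  fixes p :: "'a::field_char_0 mpoly"
  assumes "vars_in p S" "pdiff i p = 0"
  shows "vars_in p (S - {i})"
  using assms pdiff_eq_0_imp[OF assms(2)] unfolding vars_in_def by (auto simp: in_keys_iff)

definition sg :: "(nat \<Rightarrow> 'a::comm_semiring_1 mpoly) \<Rightarrow> (nat \<Rightarrow>\<^sub>0 nat) \<Rightarrow> 'a \<Rightarrow> 'a mpoly" where
  "sg s m c = Const c * (\<Prod>v\<in>Poly_Mapping.keys m. s v ^ Poly_Mapping.lookup m v)"

lemma subst_lin: "subst s p = lin (sg s) p"
  by (simp add: subst_def lin_def sg_def)

lemma sg0: "sg s m 0 = 0" by (simp add: sg_def)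
lemma sg_add: "sg s m (a + b) = sg s m a + sg s m b"
  by (simp add: sg_def Const_add distrib_right)

lemma prod_keys_superset:
  assumes "finite T" "Poly_Mapping.keys m \<subseteq> T"
  shows "(\<Prod>v\<in>Poly_Mapping.keys m. (s v :: 'b::comm_monoid_mult) ^ Poly_Mapping.lookup m v) = (\<Prod>v\<in>T. s v ^ Poly_Mapping.lookup m v)"
  by (rule prod.mono_neutral_left) (use assms in \<open>auto simp: in_keys_iff\<close>)

lemma sg_mult: "sg s (a + b) (c * d) = sg s a c * sg s b d"
proof -
  let ?T = "Poly_Mapping.keys a \<union> Poly_Mapping.keys b"
  have fin: "finite ?T" by simp
  have "(\<Prod>v\<in>Poly_Mapping.keys (a + b). s v ^ Poly_Mapping.lookup (a + b) v) = (\<Prod>v\<in>?T. s v ^ Poly_Mapping.lookup (a + b) v)"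
    by (rule prod_keys_superset[OF fin keys_add])
  also have "\<dots> = (\<Prod>v\<in>?T. s v ^ Poly_Mapping.lookup a v) * (\<Prod>v\<in>?T. s v ^ Poly_Mapping.lookup b v)"
    by (simp add: lookup_add power_add prod.distrib)
  also have "(\<Prod>v\<in>?T. s v ^ Poly_Mapping.lookup a v) = (\<Prod>v\<in>Poly_Mapping.keys a. s v ^ Poly_Mapping.lookup a v)"
    by (rule prod_keys_superset[symmetric]) auto
  also have "(\<Prod>v\<in>?T. s v ^ Poly_Mapping.lookup b v) = (\<Prod>v\<in>Poly_Mapping.keys b. s v ^ Poly_Mapping.lookup b v)"
    by (rule prod_keys_superset[symmetric]) auto
  finally show ?thesis unfolding sg_def Const_mult by (simp only: ac_simps)
qed

lemma subst_add: "subst s (p + q) = subst s p + subst s q"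
  unfolding subst_lin by (rule lin_add[of "sg s", OF sg0 sg_add])
lemma subst_0[simp]: "subst s 0 = 0"
  unfolding subst_lin by simp
lemma subst_single: "subst s (Poly_Mapping.single m c) = sg s m c"
  unfolding subst_lin by (rule lin_single[of "sg s", OF sg0])
lemma subst_mult: "subst s (p * q) = subst s p * subst s q"
  unfolding subst_lin by (rule lin_mult[of "sg s", OF sg0 sg_add sg_mult])
lemma subst_Const[simp]: "subst s (Const c) = Const c"
  by (simp add: Const_def subst_single sg_def)
lemma subst_1[simp]: "subst s 1 = 1"
  using subst_Const[of s 1] by (simp only: Const_1)
lemma subst_Var[simp]: "subst s (Var v) = s v"
  by (simp add: Var_def subst_single sg_def)

lemma subst_hom: "comm_ring_hom (subst s :: 'a::comm_ring_1 mpoly \<Rightarrow> 'a mpoly)"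
  by unfold_locales (simp_all add: subst_add subst_mult)

interpretation subst_h: comm_ring_hom "subst s :: 'a::comm_ring_1 mpoly \<Rightarrow> 'a mpoly" for s
  by (rule subst_hom)

lemma subst_sum: "subst s (\<Sum>k\<in>K. f k) = (\<Sum>k\<in>K. subst s (f k))"
  unfolding subst_lin by (rule lin_sum[of "sg s", OF sg0 sg_add])
lemma subst_uminus: "subst s (- p) = - subst s (p :: 'a::comm_ring_1 mpoly)"
  using subst_h.hom_uminus .
lemma subst_diff: "subst s (p - q) = subst s p - subst s (q :: 'a::comm_ring_1 mpoly)"
  using subst_h.hom_minus .
lemma subst_prod: "subst s (\<Prod>k\<in>K. f k) = (\<Prod>k\<in>K. subst s (f k :: 'a::comm_ring_1 mpoly))"
  using subst_h.hom_prod .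
lemma subst_power: "subst s (p ^ k) = subst s (p :: 'a::comm_ring_1 mpoly) ^ k"
  using subst_h.hom_power .

lemma subst_cong:
  assumes "vars_in p S" "\<And>v. v \<in> S \<Longrightarrow> s v = t v"
  shows "subst s p = subst t p"
  unfolding subst_def
proof (intro sum.cong refl arg_cong2[where f = "(*)"] prod.cong)
  fix m v assume "m \<in> Poly_Mapping.keys p" "v \<in> Poly_Mapping.keys m"
  then have "v \<in> S" using assms(1) unfolding vars_in_def by blast
  then show "s v ^ Poly_Mapping.lookup m v = t v ^ Poly_Mapping.lookup m v" using assms(2) by simp
qed

lemma subst_Var_id: "subst Var p = (p :: 'a::comm_semiring_1 mpoly)"
proof -
  have "subst Var p = lin Poly_Mapping.single p"
    unfolding subst_def lin_def by (intro sum.cong refl) (simp only: monomial_decomp[symmetric])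
  then show ?thesis by (simp only: lin_id)
qed

lemma subst_subst: "subst s (subst t p) = subst (\<lambda>v. subst s (t v)) (p :: 'a::comm_semiring_1 mpoly)"
proof -
  have "vars_in p UNIV" by (simp add: vars_in_def)
  then show ?thesis
  proof (induction p rule: mpoly_induct_vars)
    case (Const c) then show ?case by simp
  next
    case (Var v) then show ?case by simp
  next
    case (add p q) then show ?case by (simp add: subst_add)
  next
    case (mult p q) then show ?case by (simp add: subst_mult)
  qed
qed

lemma vars_in_subst:
  assumes "vars_in p T" "\<And>v. v \<in> T \<Longrightarrow> vars_in (s v) S"
  shows "vars_in (subst s (p :: 'a::comm_semiring_1 mpoly)) S"
  using assms(1)
proof (induction p rule: mpoly_induct_vars)
  case (Const c) then show ?case by simp
next
  case (Var v) then show ?case using assms(2) by simp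
next
  case (add p q) then show ?case by (simp add: subst_add vars_in_add)
next
  case (mult p q) then show ?case by (simp add: subst_mult vars_in_mult)
qed

lemma chain_rule:
  assumes "vars_in p V" "finite V"
  shows "pdiff j (subst s p) = (\<Sum>v\<in>V. subst s (pdiff v p) * pdiff j (s v :: 'a::comm_semiring_1 mpoly))"
  using assms(1)
proof (induction p rule: mpoly_induct_vars)
  case (Const c) then show ?case by simp
next
  case (Var w)
  have "(\<Sum>v\<in>V. subst s (pdiff v (Var w)) * pdiff j (s v)) = (\<Sum>v\<in>V. if v = w then pdiff j (s v) else 0)"
    by (intro sum.cong refl) (simp add: pdiff_Var)
  also have "\<dots> = pdiff j (s w)" using Var assms(2) by simp
  finally show ?case by simp
next
  case (add p q) then show ?case by (simp add: subst_add pdiff_add distrib_right sum.distrib)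
next
  case (mult p q)
  have "pdiff j (subst s (p * q)) = pdiff j (subst s p) * subst s q + subst s p * pdiff j (subst s q)"
    by (simp add: subst_mult pdiff_mult)
  also have "\<dots> = (\<Sum>v\<in>V. subst s (pdiff v p) * pdiff j (s v)) * subst s q + subst s p * (\<Sum>v\<in>V. subst s (pdiff v q) * pdiff j (s v))"
    using mult by simp
  also have "\<dots> = (\<Sum>v\<in>V. subst s (pdiff v (p * q)) * pdiff j (s v))"
    by (simp add: pdiff_mult subst_add subst_mult sum_distrib_left sum_distrib_right sum.distrib algebra_simps)
  finally show ?case .
qed

definition yd :: "nat set \<Rightarrow> (nat \<Rightarrow>\<^sub>0 nat) \<Rightarrow> nat" where
  "yd S m = (\<Sum>v\<in>Poly_Mapping.keys m \<inter> S. Poly_Mapping.lookup m v)"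

lemma yd_superset:
  assumes "finite T" "Poly_Mapping.keys m \<inter> S \<subseteq> T" "T \<subseteq> S"
  shows "yd S m = (\<Sum>v\<in>T. Poly_Mapping.lookup m v)"
  unfolding yd_def by (rule sum.mono_neutral_left) (use assms in \<open>auto simp: in_keys_iff\<close>)

lemma yd_add: "yd S (a + b) = yd S a + yd S b"
proof -
  let ?T = "(Poly_Mapping.keys a \<union> Poly_Mapping.keys b) \<inter> S"
  have f: "finite ?T" by simp
  have "yd S (a + b) = (\<Sum>v\<in>?T. Poly_Mapping.lookup (a + b) v)"
    by (rule yd_superset[OF f]) (use keys_add[of a b] in auto)
  also have "\<dots> = (\<Sum>v\<in>?T. Poly_Mapping.lookup a v) + (\<Sum>v\<in>?T. Poly_Mapping.lookup b v)"
    by (simp add: lookup_add sum.distrib)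
  also have "\<dots> = yd S a + yd S b"
    by (subst (1 2) yd_superset[OF f]) auto
  finally show ?thesis .
qed

lemma yd_zero_iff: "yd S m = 0 \<longleftrightarrow> Poly_Mapping.keys m \<inter> S = {}"
  unfolding yd_def by (auto simp: in_keys_iff)

lemma yd_Var: "v \<in> S \<Longrightarrow> yd S (Poly_Mapping.single v 1) = 1"
  unfolding yd_def by simp

definition psg :: "nat set \<Rightarrow> (nat \<Rightarrow>\<^sub>0 nat) \<Rightarrow> 'a::comm_semiring_1 \<Rightarrow> 'a mpoly poly" where
  "psg S m c = monom (Poly_Mapping.single m c) (yd S m)"

definition psi :: "nat set \<Rightarrow> 'a::comm_semiring_1 mpoly \<Rightarrow> 'a mpoly poly" where
  "psi S p = lin (psg S) p"

lemma psg0: "psg S m 0 = 0" by (simp add: psg_def)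
lemma psg_add: "psg S m (a + b) = psg S m a + psg S m b"
  by (simp add: psg_def add_monom single_add)
lemma psg_mult: "psg S (a + b) (c * d) = psg S a c * psg S b d"
  by (simp add: psg_def mult_monom mult_single yd_add)

lemma psi_add: "psi S (p + q) = psi S p + psi S q"
  unfolding psi_def by (rule lin_add[of "psg S", OF psg0 psg_add])
lemma psi_0[simp]: "psi S 0 = 0"
  unfolding psi_def by simp
lemma psi_single: "psi S (Poly_Mapping.single m c) = psg S m c"
  unfolding psi_def by (rule lin_single[of "psg S", OF psg0])
lemma psi_mult: "psi S (p * q) = psi S p * psi S q"
  unfolding psi_def by (rule lin_mult[of "psg S", OF psg0 psg_add psg_mult])
lemma psi_1[simp]: "psi S 1 = 1"
proof -
  have "psi S (Poly_Mapping.single 0 1) = psg S 0 1" by (rule psi_single)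
  also have "psg S 0 (1::'a) = 1" by (simp add: psg_def yd_def)
  finally show ?thesis by simp
qed
lemma psi_sum: "psi S (\<Sum>k\<in>K. f k) = (\<Sum>k\<in>K. psi S (f k))"
  unfolding psi_def by (rule lin_sum[of "psg S", OF psg0 psg_add])

lemma poly_psi: "poly (psi S p) 1 = p"
proof (induction p rule: pm_induct_add)
  case zero then show ?case by simp
next
  case (single m c) then show ?case by (simp add: psi_single psg_def poly_monom)
next
  case (add p q) then show ?case by (simp add: psi_add)
qed

lemma psi_eq_0_iff[simp]: "psi S p = 0 \<longleftrightarrow> p = 0"
  using poly_psi[of S p] by auto

lemma vars_coeff0: "vars_in (coeff (psi S p) 0) (- S)"
proof (induction p rule: pm_induct_add)
  case zero then show ?case by simp
next
  case (single m c)
  show ?case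
  proof (cases "yd S m = 0")
    case True
    then have "Poly_Mapping.keys m \<subseteq> - S" using yd_zero_iff by blast
    then show ?thesis using True by (simp add: psi_single psg_def coeff_monom vars_in_single)
  next
    case False
    then show ?thesis by (simp add: psi_single psg_def coeff_monom)
  qed
next
  case (add p q) then show ?case by (simp add: psi_add vars_in_add)
qed

lemma degree_psi_0:
  assumes "degree (psi S p) = 0"
  shows "vars_in p (- S)"
proof -
  have "psi S p = [:coeff (psi S p) 0:]" using degree_0_id[OF assms] by simp
  then have "p = coeff (psi S p) 0" using poly_psi[of S p] by (metis poly_pCons mult_zero_right add.right_neutral poly_0)
  then show ?thesis using vars_coeff0[of S p] by simp
qed

lemma sum_pCons_const: "(\<Sum>k\<in>K. [:f k:]) = [:\<Sum>k\<in>K. f k:]"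
  by (induction K rule: infinite_finite_induct) simp_all

lemma psi_free:
  assumes "vars_in p (- S)"
  shows "psi S p = [:p:]"
proof -
  have "psi S p = (\<Sum>m\<in>Poly_Mapping.keys p. [:Poly_Mapping.single m (Poly_Mapping.lookup p m):])"
    unfolding psi_def lin_def
  proof (intro sum.cong refl)
    fix m assume "m \<in> Poly_Mapping.keys p"
    then have "Poly_Mapping.keys m \<inter> S = {}" using assms unfolding vars_in_def by blast
    then have "yd S m = 0" using yd_zero_iff by blast
    then show "psg S m (Poly_Mapping.lookup p m) = [:Poly_Mapping.single m (Poly_Mapping.lookup p m):]"
      by (simp add: psg_def monom_0)
  qed
  also have "\<dots> = [:p:]" by (simp only: sum_pCons_const pm_expand[symmetric])
  finally show ?thesis .
qed

lemma psi_Var: "v \<in> S \<Longrightarrow> psi S (Var v) = monom (Var v) 1"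
  unfolding Var_def psi_single psg_def by (simp only: yd_Var)

lemma unit_const:
  fixes p :: "'a::idom mpoly"
  assumes "p dvd 1"
  shows "\<exists>c. c \<noteq> 0 \<and> p = Const c"
proof -
  obtain q where q: "1 = p * q" using assms by (elim dvdE)
  then have pq: "p \<noteq> 0" "q \<noteq> 0" by auto
  have "psi UNIV p * psi UNIV q = 1" using q by (simp add: psi_mult[symmetric])
  then have "degree (psi UNIV p) + degree (psi UNIV q) = 0"
    using degree_mult_eq[of "psi UNIV p" "psi UNIV q"] pq by simp
  then have "vars_in p (- UNIV)" using degree_psi_0 by blast
  then have k: "Poly_Mapping.keys p \<subseteq> {0}" unfolding vars_in_def by auto
  have "p = (\<Sum>m\<in>Poly_Mapping.keys p. Poly_Mapping.single m (Poly_Mapping.lookup p m))" by (rule pm_expand)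
  also have "\<dots> = (\<Sum>m\<in>{0}. Poly_Mapping.single m (Poly_Mapping.lookup p m))"
    by (rule sum.mono_neutral_left) (use k in \<open>auto simp: in_keys_iff\<close>)
  also have "\<dots> = Const (Poly_Mapping.lookup p 0)" by (simp add: Const_def)
  finally have "p = Const (Poly_Mapping.lookup p 0)" .
  then show ?thesis using pq(1) by (metis Const_0)
qed

lemma Const_unit: "c \<noteq> 0 \<Longrightarrow> Const (c::'a::field) dvd 1"
  by (rule dvdI[of _ _ "Const (inverse c)"]) (simp add: Const_mult[symmetric])

lemma jac_carrier: "jac N P \<in> carrier_mat N N"
  by (simp add: jac_def)

lemma jac_index: "i < N \<Longrightarrow> j < N \<Longrightarrow> jac N P $$ (i, j) = pdiff j (P i)"
  by (simp add: jac_def)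

lemma mat_mult_entry:
  assumes "A \<in> carrier_mat n n" "B \<in> carrier_mat n n" "i < n" "j < n"
  shows "(A * B) $$ (i, j) = (\<Sum>k<n. A $$ (i, k) * B $$ (k, j))"
  using assms by (simp add: scalar_prod_def atLeast0LessThan)

lemma inv_keller:
  fixes P :: "nat \<Rightarrow> 'a::idom mpoly"
  assumes "poly_map_invertible N P"
  shows "keller N P"
proof -
  obtain Q where Qv: "\<forall>i<N. vars_in (Q i) {..<N}" and QP: "\<forall>i<N. subst P (Q i) = Var i"
    using assms unfolding poly_map_invertible_def by blast
  define A where "A = mat N N (\<lambda>(i, v). subst P (pdiff v (Q i)))"
  have Ac: "A \<in> carrier_mat N N" unfolding A_def by simp
  have AJ: "A * jac N P = 1\<^sub>m N"
  proof (rule eq_matI)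
    fix i j assume ij: "i < dim_row (1\<^sub>m N :: 'a mpoly mat)" "j < dim_col (1\<^sub>m N :: 'a mpoly mat)"
    then have ij': "i < N" "j < N" by auto
    have "(A * jac N P) $$ (i, j) = (\<Sum>k<N. A $$ (i, k) * jac N P $$ (k, j))"
      by (rule mat_mult_entry[OF Ac jac_carrier ij'])
    also have "\<dots> = (\<Sum>v<N. subst P (pdiff v (Q i)) * pdiff j (P v))"
      by (intro sum.cong refl) (simp add: A_def jac_index ij')
    also have "\<dots> = pdiff j (subst P (Q i))"
      by (rule chain_rule[symmetric]) (use Qv ij' in auto)
    also have "\<dots> = (if j = i then 1 else 0)" using QP ij' by (simp add: pdiff_Var)
    finally show "(A * jac N P) $$ (i, j) = 1\<^sub>m N $$ (i, j)" using ij' by simp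
  qed (use Ac in \<open>auto simp: jac_def\<close>)
  have "det A * det (jac N P) = 1"
    using det_mult[OF Ac jac_carrier, of P] AJ by simp
  then have "det (jac N P) dvd 1" by (metis dvdI mult.commute)
  then show ?thesis unfolding keller_def using unit_const by blast
qed

lemma neg1_pow_sq: "(-1::'b::ring_1) ^ (n * n) = (-1) ^ n"
  by (cases "even n") (simp_all add: neg_one_even_power neg_one_odd_power)

locale L75 =
  fixes n :: nat and F :: "nat \<Rightarrow> 'a::field_char_0 mpoly" and f :: "'a mpoly" and G :: "nat \<Rightarrow> 'a mpoly"
  assumes F_poly: "\<forall>i<n. vars_in (F i) {..<n}"
    and f_poly: "vars_in f {..<n}"
    and G_def: "\<forall>j<2*n. G j = pdiff j (f + (\<Sum>i<n. Var (n + i) * F i))"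
begin

lemma dF_vars: "i < n \<Longrightarrow> vars_in (pdiff j (F i)) {..<n}"
  using F_poly vars_in_pdiff by blast

lemma G_low: "j < n \<Longrightarrow> G j = pdiff j f + (\<Sum>i<n. Var (n + i) * pdiff j (F i))"
proof -
  assume j: "j < n"
  have "G j = pdiff j f + (\<Sum>i<n. pdiff j (Var (n + i) * F i))"
    using G_def j by (simp add: pdiff_add pdiff_sum)
  also have "(\<Sum>i<n. pdiff j (Var (n + i) * F i)) = (\<Sum>i<n. Var (n + i) * pdiff j (F i))"
    using j by (intro sum.cong refl) (simp add: pdiff_mult pdiff_Var)
  finally show ?thesis .
qed

lemma G_high: "k < n \<Longrightarrow> G (n + k) = F k"
proof -
  assume k: "k < n"
  have "G (n + k) = pdiff (n + k) f + (\<Sum>i<n. pdiff (n + k) (Var (n + i) * F i))"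
    using G_def k by (simp add: pdiff_add pdiff_sum)
  also have "pdiff (n + k) f = 0" by (rule pdiff_notin[OF f_poly]) simp
  also have "(\<Sum>i<n. pdiff (n + k) (Var (n + i) * F i)) = (\<Sum>i<n. if i = k then F i else 0)"
  proof (intro sum.cong refl)
    fix i assume i: "i \<in> {..<n}"
    have "pdiff (n + k) (F i) = 0" by (rule pdiff_notin[of _ "{..<n}"]) (use F_poly i in auto)
    then show "pdiff (n + k) (Var (n + i) * F i) = (if i = k then F i else 0)"
      by (simp add: pdiff_mult pdiff_Var)
  qed
  also have "\<dots> = F k" using k by simp
  finally show ?thesis by simp
qed

lemma dG_low_high: "j < n \<Longrightarrow> l < n \<Longrightarrow> pdiff (n + l) (G j) = pdiff j (F l)"
proof -
  assume j: "j < n" and l: "l < n"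
  have h1: "pdiff (n + l) (pdiff j f) = 0"
    by (rule pdiff_notin[OF vars_in_pdiff[OF f_poly]]) simp
  have h2: "pdiff (n + l) (pdiff j (F i)) = 0" if "i < n" for i
    by (rule pdiff_notin[OF dF_vars[OF that]]) simp
  have "pdiff (n + l) (G j) = (\<Sum>i<n. pdiff (n + l) (Var (n + i) * pdiff j (F i)))"
    using j by (simp add: G_low pdiff_add pdiff_sum h1)
  also have "\<dots> = (\<Sum>i<n. if i = l then pdiff j (F i) else 0)"
    by (intro sum.cong refl) (simp add: pdiff_mult pdiff_Var h2)
  also have "\<dots> = pdiff j (F l)" using l by simp
  finally show ?thesis .
qed

lemma dG_high_high: "i < n \<Longrightarrow> l < n \<Longrightarrow> pdiff (n + l) (G (n + i)) = 0"
  using G_high pdiff_notin F_poly by (metis lessThan_iff not_add_less1)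

lemma vars_G: "j < 2 * n \<Longrightarrow> vars_in (G j) {..<2*n}"
proof -
  assume j: "j < 2 * n"
  have "vars_in (f + (\<Sum>i<n. Var (n + i) * F i)) {..<2*n}"
  proof (intro vars_in_add vars_in_sum vars_in_mult vars_in_Var)
    show "vars_in f {..<2 * n}" using f_poly by (rule vars_in_mono) auto
  next
    fix i assume "i \<in> {..<n}"
    then show "n + i \<in> {..<2 * n}" "vars_in (F i) {..<2 * n}"
      using F_poly vars_in_mono[of "F i" "{..<n}" "{..<2*n}"] by auto
  qed
  then show ?thesis using G_def j vars_in_pdiff by metis
qed

lemma det_part: "det (jac (2*n) G) = (-1)^n * (det (jac n F))^2"
proof -
  let ?J = "jac n F"
  let ?A = "jac (n + n) G"
  let ?C = "mat n n (\<lambda>(i, j). pdiff j (G i))"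
  have Ac: "?A \<in> carrier_mat (n + n) (n + n)" by (rule jac_carrier)
  define B where "B = mat (n + n) (n + n) (\<lambda>(i, j). ?A $$ (if i < n then i + n else i - n, j))"
  have d: "det ?A = (-1)^(n*n) * det B" unfolding B_def by (rule det_swap_rows[OF Ac])
  have B: "B = four_block_mat ?J (0\<^sub>m n n) ?C (transpose_mat ?J)"
  proof (rule eq_matI)
    fix i j assume ij: "i < dim_row (four_block_mat ?J (0\<^sub>m n n) ?C (transpose_mat ?J))"
      "j < dim_col (four_block_mat ?J (0\<^sub>m n n) ?C (transpose_mat ?J))"
    then have ij': "i < n + n" "j < n + n" by (simp_all add: jac_def)
    show "B $$ (i, j) = four_block_mat ?J (0\<^sub>m n n) ?C (transpose_mat ?J) $$ (i, j)"
    proof (cases "i < n")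
      case True
      then have Bij: "B $$ (i, j) = pdiff j (G (n + i))"
        using ij' by (simp add: B_def jac_def add.commute)
      show ?thesis
      proof (cases "j < n")
        case True
        then show ?thesis using \<open>i < n\<close> Bij ij' by (simp add: jac_def G_high)
      next
        case False
        then obtain l where l: "j = n + l" "l < n" using ij' by (metis add_less_cancel_left le_Suc_ex not_less)
        then show ?thesis using \<open>i < n\<close> Bij ij' by (simp add: jac_def dG_high_high)
      qed
    next
      case False
      then obtain k where k: "i = n + k" "k < n" using ij' by (metis add_less_cancel_left le_Suc_ex not_less)
      then have Bij: "B $$ (i, j) = pdiff j (G k)"
        using ij' by (simp add: B_def jac_def)
      show ?thesis
      proof (cases "j < n")
        case True
        then show ?thesis using k Bij ij' by (simp add: jac_def)
      next
        case False
        then obtain l where l: "j = n + l" "l < n" using ij' by (metis add_less_cancel_left le_Suc_ex not_less)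
        then show ?thesis using k Bij ij' by (simp add: jac_def dG_low_high)
      qed
    qed
  qed (simp_all add: B_def jac_def)
  have "det B = det ?J * det (transpose_mat ?J)"
    unfolding B by (rule det_four_block_mat_upper_right_zero[OF jac_carrier refl]) (simp_all add: jac_def)
  also have "det (transpose_mat ?J) = det ?J" by (rule det_transpose[OF jac_carrier])
  finally have dB: "det B = det ?J ^ 2" by (simp add: power2_eq_square)
  have "det (jac (2*n) G) = det ?A" by (simp only: mult_2)
  also have "\<dots> = (-1)^(n*n) * det B" by (rule d)
  also have "\<dots> = (-1)^n * det ?J ^ 2" by (simp only: neg1_pow_sq dB)
  finally show ?thesis .
qed

end

lemma sum_lessThan_add_split: "(\<Sum>i<(a::nat) + b. g i) = (\<Sum>i<a. g i) + (\<Sum>i<b. g (a + i))"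
  by (induction b) (simp_all add: add_ac)

lemma monom_sum: "(\<Sum>k\<in>K. monom (f k) m) = monom (\<Sum>k\<in>K. f k) m"
  by (induction K rule: infinite_finite_induct) (simp_all add: add_monom)

lemma monom_mult_const: "monom a m * [:c:] = monom (a * c) m"
proof -
  have "[:c:] = monom c 0" by (rule monom_0[symmetric])
  then show ?thesis by (simp only: mult_monom add_0_right)
qed

lemma Compl_atLeast_nat: "- {n::nat..} = {..<n}"
  by auto

context L75
begin

definition cc :: "(nat \<Rightarrow> 'a) \<Rightarrow> nat \<Rightarrow> 'a mpoly" where
  "cc \<mu> k = (\<Sum>j<n. Const (\<mu> j) * pdiff j (F k))"

definition PP :: "(nat \<Rightarrow> 'a) \<Rightarrow> 'a mpoly" where
  "PP \<mu> = (\<Sum>i<2*n. Const (\<mu> i) * G i) + Const (\<mu> (2*n))"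

definition aa :: "(nat \<Rightarrow> 'a) \<Rightarrow> 'a mpoly" where
  "aa \<mu> = (\<Sum>j<n. Const (\<mu> j) * pdiff j f) + (\<Sum>i<n. Const (\<mu> (n + i)) * F i) + Const (\<mu> (2*n))"

lemma cc_vars: "k < n \<Longrightarrow> vars_in (cc \<mu> k) {..<n}"
  unfolding cc_def by (intro vars_in_sum vars_in_mult vars_in_Const dF_vars)

lemma aa_vars: "vars_in (aa \<mu>) {..<n}"
  unfolding aa_def
  by (intro vars_in_add vars_in_sum vars_in_mult vars_in_Const vars_in_pdiff f_poly) (use F_poly in auto)

lemma PP_eq: "PP \<mu> = aa \<mu> + (\<Sum>k<n. Var (n + k) * cc \<mu> k)"
proof -
  have "(\<Sum>i<2*n. Const (\<mu> i) * G i) = (\<Sum>j<n. Const (\<mu> j) * G j) + (\<Sum>i<n. Const (\<mu> (n + i)) * G (n + i))"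
    by (simp only: mult_2 sum_lessThan_add_split)
  also have "(\<Sum>i<n. Const (\<mu> (n + i)) * G (n + i)) = (\<Sum>i<n. Const (\<mu> (n + i)) * F i)"
    by (intro sum.cong refl) (simp add: G_high)
  also have "(\<Sum>j<n. Const (\<mu> j) * G j) = (\<Sum>j<n. Const (\<mu> j) * pdiff j f + (\<Sum>k<n. Var (n + k) * (Const (\<mu> j) * pdiff j (F k))))"
    by (intro sum.cong refl) (simp add: G_low distrib_left sum_distrib_left mult.left_commute)
  also have "\<dots> = (\<Sum>j<n. Const (\<mu> j) * pdiff j f) + (\<Sum>j<n. \<Sum>k<n. Var (n + k) * (Const (\<mu> j) * pdiff j (F k)))"
    by (rule sum.distrib)
  also have "(\<Sum>j<n. \<Sum>k<n. Var (n + k) * (Const (\<mu> j) * pdiff j (F k))) = (\<Sum>k<n. \<Sum>j<n. Var (n + k) * (Const (\<mu> j) * pdiff j (F k)))"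
    by (rule sum.swap)
  also have "\<dots> = (\<Sum>k<n. Var (n + k) * cc \<mu> k)"
    by (simp only: cc_def sum_distrib_left)
  finally show ?thesis unfolding PP_def aa_def by (simp only: add_ac)
qed

lemma pdiff_y_free: "vars_in q {..<n} \<Longrightarrow> pdiff (n + k) q = 0"
  by (rule pdiff_notin) auto

lemma pdiff_PP: "k < n \<Longrightarrow> pdiff (n + k) (PP \<mu>) = cc \<mu> k"
proof -
  assume k: "k < n"
  have "pdiff (n + k) (PP \<mu>) = (\<Sum>l<n. pdiff (n + k) (Var (n + l) * cc \<mu> l))"
    unfolding PP_eq by (simp add: pdiff_add pdiff_sum pdiff_y_free[OF aa_vars])
  also have "\<dots> = (\<Sum>l<n. if l = k then cc \<mu> l else 0)"
    by (intro sum.cong refl) (simp add: pdiff_mult pdiff_Var pdiff_y_free[OF cc_vars])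
  also have "\<dots> = cc \<mu> k" using k by simp
  finally show ?thesis .
qed

lemma adj_comb:
  assumes "\<forall>k<n. q dvd cc \<mu> k" "j < n"
  shows "q dvd det (jac n F) * Const (\<mu> j)"
proof -
  let ?J = "jac n F"
  let ?B = "adj_mat ?J"
  have Bc: "?B \<in> carrier_mat n n" using adj_mat(1)[OF jac_carrier] .
  have BJ: "?B * ?J = det ?J \<cdot>\<^sub>m 1\<^sub>m n" using adj_mat(3)[OF jac_carrier] .
  have "(\<Sum>k<n. ?B $$ (j, k) * cc \<mu> k) = (\<Sum>k<n. \<Sum>l<n. ?B $$ (j, k) * (?J $$ (k, l) * Const (\<mu> l)))"
    unfolding cc_def by (intro sum.cong refl) (simp add: sum_distrib_left jac_index ac_simps)
  also have "\<dots> = (\<Sum>l<n. \<Sum>k<n. ?B $$ (j, k) * (?J $$ (k, l) * Const (\<mu> l)))"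
    by (rule sum.swap)
  also have "\<dots> = (\<Sum>l<n. (\<Sum>k<n. ?B $$ (j, k) * ?J $$ (k, l)) * Const (\<mu> l))"
    by (simp only: sum_distrib_right mult.assoc)
  also have "\<dots> = (\<Sum>l<n. (?B * ?J) $$ (j, l) * Const (\<mu> l))"
    by (intro sum.cong refl) (simp add: mat_mult_entry[OF Bc jac_carrier] assms(2))
  also have "\<dots> = (\<Sum>l<n. (if j = l then det ?J else 0) * Const (\<mu> l))"
    by (intro sum.cong refl) (simp add: BJ assms(2))
  also have "\<dots> = (\<Sum>l<n. if j = l then det ?J * Const (\<mu> l) else 0)"
    by (intro sum.cong refl) simp
  also have "\<dots> = det ?J * Const (\<mu> j)" using assms(2) by simp
  finally have eq: "(\<Sum>k<n. ?B $$ (j, k) * cc \<mu> k) = det ?J * Const (\<mu> j)" .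
  have "q dvd (\<Sum>k<n. ?B $$ (j, k) * cc \<mu> k)"
    using assms(1) by (intro dvd_sum dvd_mult) auto
  then show ?thesis using eq by simp
qed

lemma irred_part:
  assumes K: "keller n F" and mu: "\<exists>i<n. \<mu> i \<noteq> 0"
  shows "irreducible ((\<Sum>i<2*n. Const (\<mu> i) * G i) + Const (\<mu> (2*n)))"
proof -
  obtain d where d: "d \<noteq> 0" "det (jac n F) = Const d" using K unfolding keller_def by blast
  obtain j where j: "j < n" "\<mu> j \<noteq> 0" using mu by blast
  let ?S = "{n..}"
  let ?Y = "\<Sum>k<n. Var (n + k) * cc \<mu> k"
  have unit_of: "q dvd 1" if "\<forall>k<n. q dvd cc \<mu> k" for q
  proof -
    have "q dvd Const (d * \<mu> j)" using adj_comb[OF that j(1)] d by (simp add: Const_mult)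
    moreover have "d * \<mu> j \<noteq> 0" using d j by simp
    then have "Const (d * \<mu> j) dvd 1" by (rule Const_unit)
    ultimately show ?thesis by (rule dvd_trans)
  qed
  have Ynz: "?Y \<noteq> 0"
  proof
    assume "?Y = 0"
    have "pdiff (n + k) ?Y = cc \<mu> k" if "k < n" for k
    proof -
      have "pdiff (n + k) ?Y = (\<Sum>l<n. if l = k then cc \<mu> l else 0)"
        unfolding pdiff_sum by (intro sum.cong refl) (simp add: pdiff_mult pdiff_Var pdiff_y_free[OF cc_vars])
      then show ?thesis using that by simp
    qed
    then have "\<forall>k<n. cc \<mu> k = 0" using \<open>?Y = 0\<close> by simp
    then have "(0::'a mpoly) dvd 1" using unit_of[of 0] by simp
    then show False by simp
  qed
  have psi_aa: "psi ?S (aa \<mu>) = [:aa \<mu>:]"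
    by (rule psi_free) (simp only: Compl_atLeast_nat aa_vars)
  have psi_cc: "psi ?S (cc \<mu> k) = [:cc \<mu> k:]" if "k < n" for k
    by (rule psi_free) (simp only: Compl_atLeast_nat cc_vars[OF that])
  have psi_V: "psi ?S (Var (n + k)) = monom (Var (n + k)) 1" for k
    by (rule psi_Var) simp
  have sumeq: "(\<Sum>k<n. psi ?S (Var (n + k)) * psi ?S (cc \<mu> k)) = (\<Sum>k<n. monom (Var (n + k) * cc \<mu> k) 1)"
    by (intro sum.cong refl) (simp only: psi_cc psi_V monom_mult_const lessThan_iff)
  have psiP: "psi ?S (PP \<mu>) = pCons (aa \<mu>) [:?Y:]"
  proof -
    have "psi ?S (PP \<mu>) = psi ?S (aa \<mu>) + (\<Sum>k<n. psi ?S (Var (n + k)) * psi ?S (cc \<mu> k))"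
      by (simp only: PP_eq psi_add psi_sum psi_mult)
    also have "\<dots> = [:aa \<mu>:] + monom ?Y 1"
      by (simp only: psi_aa sumeq monom_sum)
    also have "monom ?Y 1 = pCons 0 [:?Y:]" by (simp add: monom_Suc monom_0)
    finally show ?thesis by simp
  qed
  have degP: "degree (psi ?S (PP \<mu>)) = 1" using psiP Ynz by simp
  have PPnz: "PP \<mu> \<noteq> 0" using degP by auto
  have fac: "q dvd 1" if "degree (psi ?S q) = 0" "PP \<mu> = q * r" for q r
  proof -
    have qv: "vars_in q {..<n}" using degree_psi_0[OF that(1)] by (simp add: Compl_atLeast_nat)
    have "q dvd cc \<mu> k" if "k < n" for k
    proof -
      have "cc \<mu> k = pdiff (n + k) (q * r)" using pdiff_PP[OF that, of \<mu>] \<open>PP \<mu> = q * r\<close> by simp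
      also have "\<dots> = q * pdiff (n + k) r" by (simp add: pdiff_mult pdiff_y_free[OF qv])
      finally show ?thesis by simp
    qed
    then show ?thesis using unit_of by blast
  qed
  have "irreducible (PP \<mu>)"
    unfolding irreducible_def
  proof (intro conjI allI impI)
    show "PP \<mu> \<noteq> 0" by (rule PPnz)
    show "\<not> PP \<mu> dvd 1"
    proof
      assume "PP \<mu> dvd 1"
      then obtain q where "1 = PP \<mu> * q" by (elim dvdE)
      then have "psi ?S (PP \<mu>) * psi ?S q = 1" by (simp add: psi_mult[symmetric])
      moreover have "q \<noteq> 0" using \<open>1 = PP \<mu> * q\<close> by auto
      ultimately have "degree (psi ?S (PP \<mu>)) + degree (psi ?S q) = 0"
        using degree_mult_eq[of "psi ?S (PP \<mu>)" "psi ?S q"] PPnz by simp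
      then show False using degP by simp
    qed
    fix q r assume qr: "PP \<mu> = q * r"
    then have "q \<noteq> 0" "r \<noteq> 0" using PPnz by auto
    then have "degree (psi ?S q) + degree (psi ?S r) = 1"
      using degree_mult_eq[of "psi ?S q" "psi ?S r"] degP qr by (simp add: psi_mult)
    then have "degree (psi ?S q) = 0 \<or> degree (psi ?S r) = 0" by arith
    then show "q dvd 1 \<or> r dvd 1"
      using fac[of q r] fac[of r q] qr by (auto simp: mult.commute)
  qed
  then show ?thesis unfolding PP_def .
qed

end

lemma mult_swap3: "(a * b) * c = b * (a * (c::'a::comm_semiring_1))"
  by (simp add: ac_simps)

lemma mult_swap3': "a * (b * c) = b * (c * (a::'a::comm_semiring_1))"
  by (simp add: ac_simps)

lemma subst_id_on:
  assumes "vars_in p S" "\<And>v. v \<in> S \<Longrightarrow> s v = Var v"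
  shows "subst s p = (p :: 'a::comm_semiring_1 mpoly)"
proof -
  have "subst s p = subst Var p" by (rule subst_cong[OF assms(1)]) (simp add: assms(2))
  then show ?thesis by (simp only: subst_Var_id)
qed

context L75
begin

lemma J_vars: "i < n \<Longrightarrow> vars_in (pdiff l (F i)) {..<n}"
  by (rule dF_vars)

lemma inverse_matrix:
  assumes d: "det (jac n F) = Const d" "d \<noteq> 0"
  obtains nn where "\<And>k i. vars_in (nn k i) {..<n}"
    "\<And>k l. k < n \<Longrightarrow> l < n \<Longrightarrow> (\<Sum>i<n. nn k i * pdiff l (F i)) = (if k = l then 1 else 0)"
    "\<And>k l. k < n \<Longrightarrow> l < n \<Longrightarrow> (\<Sum>i<n. pdiff i (F l) * nn i k) = (if l = k then 1 else 0)"
proof -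
  let ?J = "jac n F"
  let ?B = "adj_mat ?J"
  define \<tau> where "\<tau> = (\<lambda>k. if k < n then Var k else (0::'a mpoly))"
  define nn where "nn = (\<lambda>k i. subst \<tau> (Const (inverse d) * ?B $$ (k, i)))"
  have Bc: "?B \<in> carrier_mat n n" using adj_mat(1)[OF jac_carrier] .
  have BJ: "?B * ?J = det ?J \<cdot>\<^sub>m 1\<^sub>m n" using adj_mat(3)[OF jac_carrier] .
  have JB: "?J * ?B = det ?J \<cdot>\<^sub>m 1\<^sub>m n" using adj_mat(2)[OF jac_carrier] .
  have tauJ: "subst \<tau> (pdiff l (F i)) = pdiff l (F i)" if "i < n" for i l
    by (rule subst_id_on[OF J_vars[OF that]]) (simp add: \<tau>_def)
  have cd: "Const (inverse d) * Const d = (1::'a mpoly)"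
    using d(2) by (simp add: Const_mult[symmetric])
  have v: "vars_in (nn k i) {..<n}" for k i
    unfolding nn_def
  proof (rule vars_in_subst[of _ UNIV])
    show "vars_in (Const (inverse d) * ?B $$ (k, i)) UNIV" by (simp add: vars_in_def)
  next
    fix v show "vars_in (\<tau> v) {..<n}" by (simp add: \<tau>_def vars_in_Var)
  qed
  have e1: "(\<Sum>i<n. nn k i * pdiff l (F i)) = (if k = l then 1 else 0)" if "k < n" "l < n" for k l
  proof -
    have "(\<Sum>i<n. nn k i * pdiff l (F i)) = subst \<tau> (\<Sum>i<n. Const (inverse d) * ?B $$ (k, i) * ?J $$ (i, l))"
      unfolding nn_def subst_sum subst_mult using that by (intro sum.cong refl) (simp add: tauJ jac_index)
    also have "(\<Sum>i<n. Const (inverse d) * ?B $$ (k, i) * ?J $$ (i, l)) = Const (inverse d) * (?B * ?J) $$ (k, l)"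
      using that by (simp add: mat_mult_entry[OF Bc jac_carrier] sum_distrib_left mult.assoc)
    also have "\<dots> = (if k = l then 1 else 0)"
      using that d cd by (simp add: BJ)
    finally show ?thesis by simp
  qed
  have e2: "(\<Sum>i<n. pdiff i (F l) * nn i k) = (if l = k then 1 else 0)" if "k < n" "l < n" for k l
  proof -
    have "(\<Sum>i<n. pdiff i (F l) * nn i k) = subst \<tau> (\<Sum>i<n. Const (inverse d) * (?J $$ (l, i) * ?B $$ (i, k)))"
      unfolding nn_def subst_sum subst_mult using that by (intro sum.cong refl) (simp add: tauJ jac_index ac_simps)
    also have "(\<Sum>i<n. Const (inverse d) * (?J $$ (l, i) * ?B $$ (i, k))) = Const (inverse d) * (?J * ?B) $$ (l, k)"
      using that by (simp add: mat_mult_entry[OF jac_carrier Bc] sum_distrib_left)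
    also have "\<dots> = (if l = k then 1 else 0)"
      using that d cd by (simp add: JB)
    finally show ?thesis by simp
  qed
  show ?thesis using that[OF v e1 e2] .
qed

lemma G_minus: "k < n \<Longrightarrow> G k - pdiff k f = (\<Sum>l<n. Var (n + l) * pdiff k (F l))"
  by (simp add: G_low)

lemma forward:
  assumes "poly_map_invertible n F"
  shows "poly_map_invertible (2*n) G"
proof -
  obtain Q where Qv: "\<forall>i<n. vars_in (Q i) {..<n}" and QF: "\<forall>i<n. subst Q (F i) = Var i"
    and FQ: "\<forall>i<n. subst F (Q i) = Var i"
    using assms unfolding poly_map_invertible_def by blast
  obtain d where d: "d \<noteq> 0" "det (jac n F) = Const d"
    using inv_keller[OF assms] unfolding keller_def by blast
  obtain nn where nnv: "\<And>k i. vars_in (nn k i) {..<n}"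
    and E1: "\<And>k l. k < n \<Longrightarrow> l < n \<Longrightarrow> (\<Sum>i<n. nn k i * pdiff l (F i)) = (if k = l then 1 else 0)"
    and E2: "\<And>k l. k < n \<Longrightarrow> l < n \<Longrightarrow> (\<Sum>i<n. pdiff i (F l) * nn i k) = (if l = k then 1 else 0)"
    using inverse_matrix[OF d(2) d(1)] by blast
  define \<sigma> where "\<sigma> = (\<lambda>k. if k < n then Var (n + k) else (0::'a mpoly))"
  define Qv where "Qv = (\<lambda>k. subst \<sigma> (Q k))"
  define H where "H = (\<lambda>j. if j < n then Qv j else (\<Sum>k<n. subst Qv (nn k (j - n)) * (Var k - subst Qv (pdiff k f))))"
  have \<sigma>v: "vars_in (\<sigma> k) {n..<2*n}" for k
    by (simp add: \<sigma>_def vars_in_Var)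
  have UNIVv: "vars_in p UNIV" for p :: "'a mpoly" by (simp add: vars_in_def)
  have Qvv: "vars_in (Qv k) {n..<2*n}" for k
    unfolding Qv_def by (rule vars_in_subst[OF UNIVv \<sigma>v])
  have sQv: "vars_in (subst Qv p) {n..<2*n}" for p
    by (rule vars_in_subst[OF UNIVv Qvv])
  have Hlow: "subst H p = subst Qv p" if "vars_in p {..<n}" for p
    by (rule subst_cong[OF that]) (simp add: H_def)
  have Hv: "vars_in (H j) {..<2*n}" if "j < 2*n" for j
  proof (cases "j < n")
    case True then show ?thesis using Qvv[of j] by (simp add: H_def) (erule vars_in_mono, auto)
  next
    case False
    show ?thesis unfolding H_def using False
      by (simp, intro vars_in_sum vars_in_mult vars_in_diff vars_in_Var)
         (auto intro: vars_in_mono[OF sQv])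
  qed
  have GQv: "subst G (Qv k) = Var k" if "k < n" for k
  proof -
    have "subst G (Qv k) = subst (\<lambda>v. subst G (\<sigma> v)) (Q k)" unfolding Qv_def by (rule subst_subst)
    also have "\<dots> = subst F (Q k)"
      by (rule subst_cong[OF Qv[rule_format, OF that]]) (simp add: \<sigma>_def G_high)
    also have "\<dots> = Var k" using FQ that by simp
    finally show ?thesis .
  qed
  have GQp: "subst G (subst Qv p) = p" if "vars_in p {..<n}" for p
  proof -
    have "subst G (subst Qv p) = subst (\<lambda>v. subst G (Qv v)) p" by (rule subst_subst)
    also have "\<dots> = p" by (rule subst_id_on[OF that]) (simp add: GQv)
    finally show ?thesis .
  qed
  have QvF: "subst Qv (F i) = Var (n + i)" if "i < n" for i
  proof -
    have "subst Qv (F i) = subst \<sigma> (subst Q (F i))" unfolding Qv_def by (rule subst_subst[symmetric])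
    also have "\<dots> = Var (n + i)" using QF that by (simp add: \<sigma>_def)
    finally show ?thesis .
  qed
  have Hhigh: "H (n + i) = (\<Sum>k<n. subst Qv (nn k i) * (Var k - subst Qv (pdiff k f)))" for i
    by (simp add: H_def)
  have HG: "subst H (G j) = Var j" if "j < 2*n" for j
  proof (cases "j < n")
    case True
    let ?s = "\<lambda>p. subst Qv p"
    have "subst H (G j) = subst H (pdiff j f) + (\<Sum>i<n. subst H (Var (n + i)) * subst H (pdiff j (F i)))"
      using True by (simp only: G_low subst_add subst_sum subst_mult)
    also have "subst H (pdiff j f) = ?s (pdiff j f)" by (rule Hlow[OF vars_in_pdiff[OF f_poly]])
    also have "(\<Sum>i<n. subst H (Var (n + i)) * subst H (pdiff j (F i))) = (\<Sum>i<n. H (n + i) * ?s (pdiff j (F i)))"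
      by (intro sum.cong refl) (simp only: subst_Var Hlow[OF J_vars] lessThan_iff)
    also have "(\<Sum>i<n. H (n + i) * ?s (pdiff j (F i))) = (\<Sum>i<n. \<Sum>k<n. (?s (nn k i) * (Var k - ?s (pdiff k f))) * ?s (pdiff j (F i)))"
      by (intro sum.cong refl) (simp only: Hhigh sum_distrib_right)
    also have "\<dots> = (\<Sum>i<n. \<Sum>k<n. (Var k - ?s (pdiff k f)) * (?s (nn k i) * ?s (pdiff j (F i))))"
      by (intro sum.cong refl) (rule mult_swap3)
    also have "\<dots> = (\<Sum>k<n. \<Sum>i<n. (Var k - ?s (pdiff k f)) * (?s (nn k i) * ?s (pdiff j (F i))))"
      by (rule sum.swap)
    also have "\<dots> = (\<Sum>k<n. (Var k - ?s (pdiff k f)) * ?s (\<Sum>i<n. nn k i * pdiff j (F i)))"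
      by (simp only: sum_distrib_left subst_sum subst_mult)
    also have "\<dots> = (\<Sum>k<n. if k = j then Var k - ?s (pdiff k f) else 0)"
      by (intro sum.cong refl) (simp add: E1 True)
    also have "\<dots> = Var j - ?s (pdiff j f)" using True by simp
    finally show ?thesis by simp
  next
    case False
    define i where "i = j - n"
    have i: "j = n + i" "i < n" using False that by (simp_all add: i_def)
    have "subst H (G j) = subst H (F i)" using i by (simp add: G_high)
    also have "\<dots> = subst Qv (F i)" by (rule Hlow) (use F_poly i in auto)
    also have "\<dots> = Var j" using QvF i by simp
    finally show ?thesis .
  qed
  have GH: "subst G (H j) = Var j" if "j < 2*n" for j
  proof (cases "j < n")
    case True
    then show ?thesis by (simp add: H_def GQv)
  next
    case False
    define i where "i = j - n"
    have i: "j = n + i" "i < n" using False that by (simp_all add: i_def)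
    have "subst G (H j) = (\<Sum>k<n. subst G (subst Qv (nn k i)) * (subst G (Var k) - subst G (subst Qv (pdiff k f))))"
      unfolding i(1) Hhigh by (simp only: subst_sum subst_mult subst_diff)
    also have "\<dots> = (\<Sum>k<n. nn k i * (G k - pdiff k f))"
      by (intro sum.cong refl) (simp only: GQp[OF nnv] GQp[OF vars_in_pdiff[OF f_poly]] subst_Var)
    also have "\<dots> = (\<Sum>k<n. \<Sum>l<n. nn k i * (Var (n + l) * pdiff k (F l)))"
      by (intro sum.cong refl) (simp only: G_minus lessThan_iff sum_distrib_left)
    also have "\<dots> = (\<Sum>k<n. \<Sum>l<n. Var (n + l) * (pdiff k (F l) * nn k i))"
      by (intro sum.cong refl) (rule mult_swap3')
    also have "\<dots> = (\<Sum>l<n. \<Sum>k<n. Var (n + l) * (pdiff k (F l) * nn k i))"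
      by (rule sum.swap)
    also have "\<dots> = (\<Sum>l<n. Var (n + l) * (\<Sum>k<n. pdiff k (F l) * nn k i))"
      by (simp only: sum_distrib_left)
    also have "\<dots> = (\<Sum>l<n. if l = i then Var (n + l) else 0)"
      by (intro sum.cong refl) (simp add: E2 i(2))
    also have "\<dots> = Var j" using i by simp
    finally show ?thesis .
  qed
  show ?thesis unfolding poly_map_invertible_def using Hv HG GH by blast
qed

end

context L75
begin

lemma backward:
  assumes "poly_map_invertible (2*n) G"
  shows "poly_map_invertible n F"
proof -
  obtain H where Hv: "\<forall>i<2*n. vars_in (H i) {..<2*n}" and HG: "\<forall>i<2*n. subst H (G i) = Var i"
    and GH: "\<forall>i<2*n. subst G (H i) = Var i"
    using assms unfolding poly_map_invertible_def by blast
  obtain c where c: "c \<noteq> 0" "det (jac (2*n) G) = Const c"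
    using inv_keller[OF assms] unfolding keller_def by blast
  have detJ: "det (jac n F) \<noteq> 0"
  proof
    assume "det (jac n F) = 0"
    then have "Const c = 0" using c(2) det_part by simp
    then show False using c(1) by simp
  qed
  have HGp: "subst H (subst G p) = p" if "vars_in p {..<2*n}" for p
  proof -
    have "subst H (subst G p) = subst (\<lambda>v. subst H (G v)) p" by (rule subst_subst)
    also have "\<dots> = subst Var p" by (rule subst_cong[OF that]) (simp add: HG)
    finally show ?thesis by (simp only: subst_Var_id)
  qed
  let ?J = "jac n F"
  let ?B = "adj_mat ?J"
  have Bc: "?B \<in> carrier_mat n n" using adj_mat(1)[OF jac_carrier] .
  have BJ: "?B * ?J = det ?J \<cdot>\<^sub>m 1\<^sub>m n" using adj_mat(3)[OF jac_carrier] .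
  have key: "pdiff v (H i) = 0" if i: "i < n" and v0: "v < n" for i v
  proof -
    define w where "w = (\<lambda>v. subst G (pdiff v (H i)))"
    have Hiv: "vars_in (H i) {..<2*n}" using Hv i by simp
    have lin: "(\<Sum>v<n. pdiff v (F l) * w v) = 0" if l: "l < n" for l
    proof -
      have "pdiff (n + l) (subst G (H i)) = (\<Sum>v<2*n. subst G (pdiff v (H i)) * pdiff (n + l) (G v))"
        by (rule chain_rule[OF Hiv]) simp
      also have "\<dots> = (\<Sum>v<n. subst G (pdiff v (H i)) * pdiff (n + l) (G v))
          + (\<Sum>k<n. subst G (pdiff (n + k) (H i)) * pdiff (n + l) (G (n + k)))"
        by (simp only: mult_2 sum_lessThan_add_split)
      also have "(\<Sum>k<n. subst G (pdiff (n + k) (H i)) * pdiff (n + l) (G (n + k))) = 0"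
        by (rule sum.neutral) (simp add: dG_high_high l)
      also have "(\<Sum>v<n. subst G (pdiff v (H i)) * pdiff (n + l) (G v)) = (\<Sum>v<n. pdiff v (F l) * w v)"
        by (intro sum.cong refl) (simp add: dG_low_high l w_def mult.commute)
      finally have "pdiff (n + l) (subst G (H i)) = (\<Sum>v<n. pdiff v (F l) * w v)" by simp
      moreover have "pdiff (n + l) (subst G (H i)) = 0" using GH i by (simp add: pdiff_Var)
      ultimately show ?thesis by simp
    qed
    have "(\<Sum>l<n. ?B $$ (v, l) * (\<Sum>u<n. pdiff u (F l) * w u)) = 0"
      by (rule sum.neutral) (simp add: lin)
    moreover have "(\<Sum>l<n. ?B $$ (v, l) * (\<Sum>u<n. pdiff u (F l) * w u)) = (\<Sum>l<n. \<Sum>u<n. ?B $$ (v, l) * ?J $$ (l, u) * w u)"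
      by (intro sum.cong refl) (simp add: sum_distrib_left jac_index mult.assoc)
    moreover have "(\<Sum>l<n. \<Sum>u<n. ?B $$ (v, l) * ?J $$ (l, u) * w u) = (\<Sum>u<n. \<Sum>l<n. ?B $$ (v, l) * ?J $$ (l, u) * w u)"
      by (rule sum.swap)
    moreover have "(\<Sum>u<n. \<Sum>l<n. ?B $$ (v, l) * ?J $$ (l, u) * w u) = (\<Sum>u<n. (?B * ?J) $$ (v, u) * w u)"
      by (intro sum.cong refl) (simp add: mat_mult_entry[OF Bc jac_carrier] v0 sum_distrib_right)
    moreover have "(\<Sum>u<n. (?B * ?J) $$ (v, u) * w u) = (\<Sum>u<n. if v = u then det ?J * w u else 0)"
      by (intro sum.cong refl) (simp add: BJ v0)
    moreover have "\<dots> = det ?J * w v" using v0 by simp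
    ultimately have "det ?J * w v = 0" by simp
    then have "w v = 0" using detJ by simp
    then have "subst H (subst G (pdiff v (H i))) = 0" by (simp add: w_def)
    then show ?thesis using HGp[OF vars_in_pdiff[OF Hiv]] by simp
  qed
  have Hyv: "vars_in (H i) {n..<2*n}" if i: "i < n" for i
    unfolding vars_in_def
  proof (intro ballI subsetI)
    fix m x assume m: "m \<in> Poly_Mapping.keys (H i)" and x: "x \<in> Poly_Mapping.keys m"
    have "i < 2 * n" using i by simp
    then have "Poly_Mapping.keys m \<subseteq> {..<2*n}" using Hv m unfolding vars_in_def by blast
    then have "x < 2 * n" using x by auto
    moreover have "\<not> x < n"
    proof
      assume "x < n"
      then have "Poly_Mapping.lookup m x = 0" using pdiff_eq_0_imp[OF key[OF i] m] by blast
      then show False using x by (simp add: in_keys_iff)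
    qed
    ultimately show "x \<in> {n..<2*n}" by simp
  qed
  define \<rho> where "\<rho> = (\<lambda>k. if k < n then 0 else Var (k - n) :: 'a mpoly)"
  define Q where "Q = (\<lambda>k. subst \<rho> (H k))"
  have Qv: "vars_in (Q i) {..<n}" if "i < n" for i
    unfolding Q_def
  proof (rule vars_in_subst[OF Hyv[OF that]])
    fix v assume "v \<in> {n..<2*n}"
    then have "v - n \<in> {..<n}" "\<not> v < n" by auto
    then show "vars_in (\<rho> v) {..<n}" using vars_in_Var[of "v - n" "{..<n}"] by (simp add: \<rho>_def)
  qed
  have FQ: "subst F (Q i) = Var i" if i: "i < n" for i
  proof -
    have "subst F (Q i) = subst (\<lambda>k. subst F (\<rho> k)) (H i)" unfolding Q_def by (rule subst_subst)
    also have "\<dots> = subst G (H i)"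
    proof (rule subst_cong[OF Hyv[OF i]])
      fix k assume k: "k \<in> {n..<2*n}"
      then have "k = n + (k - n)" "k - n < n" by auto
      then have "G k = F (k - n)" using G_high by metis
      then show "subst F (\<rho> k) = G k" using k by (simp add: \<rho>_def)
    qed
    also have "\<dots> = Var i" using GH i by simp
    finally show ?thesis .
  qed
  have QF: "subst Q (F i) = Var i" if i: "i < n" for i
  proof -
    have "subst Q (F i) = subst \<rho> (subst H (F i))" unfolding Q_def by (rule subst_subst[symmetric])
    moreover have "subst H (F i) = Var (n + i)"
    proof -
      have "G (n + i) = F i" by (rule G_high[OF i])
      moreover have "subst H (G (n + i)) = Var (n + i)" using HG i by simp
      ultimately show ?thesis by simp
    qed
    ultimately show ?thesis by (simp add: \<rho>_def)
  qed
  show ?thesis unfolding poly_map_invertible_def using Qv QF FQ by blast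
qed

end

theorem lemma7p5:
  fixes n :: nat
    and F :: "nat \<Rightarrow> 'a::field_char_0 mpoly"
    and f :: "'a mpoly"
    and G :: "nat \<Rightarrow> 'a mpoly"
  assumes F_poly: "\<forall>i<n. vars_in (F i) {..<n}"
    and f_poly: "vars_in f {..<n}"
    and G_def: "\<forall>j<2*n. G j = pdiff j (f + (\<Sum>i<n. Var (n + i) * F i))"
  shows "det (jac (2*n) G) = (-1)^n * (det (jac n F))^2 \<and>
         (poly_map_invertible n F \<longleftrightarrow> poly_map_invertible (2*n) G) \<and>
         (keller n F \<longrightarrow>
           (\<forall>\<mu> :: nat \<Rightarrow> 'a. (\<exists>i<n. \<mu> i \<noteq> 0) \<longrightarrow>
              irreducible ((\<Sum>i<2*n. Const (\<mu> i) * G i) + Const (\<mu> (2*n)))))"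
proof -
  interpret L75 n F f G using assms by unfold_locales
  show ?thesis using det_part forward backward irred_part by blast
qed

end
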